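(* Suppose $0\le q\le n-1$ and let $\Theta:C\setminus\{o\}\to(0,\infty)$ be continuous and positively homogeneous of degree $-q$. Let $E_1,E_2$ be $(C,\Theta)$-close sets. Then $$\overline{V}_\Theta(E_1+E_2)^{\frac{1}{n-q}}\le\overline{V}_\Theta(E_1)^{\frac{1}{n-q}}+\overline{V}_\Theta(E_2)^{\frac{1}{n-q}}.$$ Moreover, if $q\in[0,n-1)$, equality holds if and only if $E_1$ and $E_2$ are dilates of each other.
   Context: $C\subset\mathbb{R}^n$ ($n\ge2$) is a pointed closed convex cone with nonempty interior. A $C$-pseudo-cone is a nonempty closed convex set $E$ with $o\notin E$, $\lambda x\in E$ for all $x\in E,\lambda\ge1$, and recession cone $\{x:E+x\subset E\}$ equal to $C$. $\overline{V}_\Theta(E)=\int_{C\setminus E}\Theta\,d\mathcal{H}^n$. For $0\le q\le n-1$, a $(C,\Theta)$-close set is a $C$-pseudo-cone $E$ with $\overline{V}_\Theta(E)<\infty$. $E_1+E_2$ denotes the Minkowski sum. Dilates: $E_2=\lambda E_1$ for some $\lambda>0$. *)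

theory Defs
  imports "HOL-Analysis.Analysis"
begin

definition pointed_cone :: "'a::euclidean_space set \<Rightarrow> bool" where
  "pointed_cone C \<longleftrightarrow> closed C \<and> convex C \<and> cone C \<and> C \<inter> uminus ` C = {0} \<and> interior C \<noteq> {}"

definition rec_cone :: "'a::euclidean_space set \<Rightarrow> 'a set" where
  "rec_cone E = {x. \<forall>y\<in>E. y + x \<in> E}"

definition pseudo_cone :: "'a::euclidean_space set \<Rightarrow> 'a set \<Rightarrow> bool" where
  "pseudo_cone C E \<longleftrightarrow> E \<noteq> {} \<and> closed E \<and> convex E \<and> 0 \<notin> E \<and>
     (\<forall>x\<in>E. \<forall>l::real. l \<ge> 1 \<longrightarrow> l *\<^sub>R x \<in> E) \<and> rec_cone E = C"

text \<open>Theta-covolume: integral of Theta over C minus E w.r.t. Lebesgue measure (= H^n).\<close>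
definition covol :: "'a::euclidean_space set \<Rightarrow> ('a \<Rightarrow> real) \<Rightarrow> 'a set \<Rightarrow> ennreal" where
  "covol C \<Theta> E = (\<integral>\<^sup>+ x \<in> C - E. ennreal (\<Theta> x) \<partial>lebesgue)"

definition close_set :: "'a::euclidean_space set \<Rightarrow> ('a \<Rightarrow> real) \<Rightarrow> 'a set \<Rightarrow> bool" where
  "close_set C \<Theta> E \<longleftrightarrow> pseudo_cone C E \<and> covol C \<Theta> E < \<infinity>"

definition msum :: "'a::euclidean_space set \<Rightarrow> 'a set \<Rightarrow> 'a set" where
  "msum A B = {x + y | x y. x \<in> A \<and> y \<in> B}"

definition dilates :: "'a::euclidean_space set \<Rightarrow> 'a set \<Rightarrow> bool" where
  "dilates A B \<longleftrightarrow> (\<exists>l::real. l > 0 \<and> B = (\<lambda>x. l *\<^sub>R x) ` A)"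

end

theory Submission
  imports Defs
begin



lemma bern_strict:
  fixes p h :: real
  assumes p: "p > 1" and h: "h \<ge> -1" "h \<noteq> 0"
  shows "1 + p * h < (1 + h) powr p"
proof -
  define g where "g x = (1 + x) powr p - 1 - p * x" for x :: real
  have D: "DERIV g x :> p * (1 + x) powr (p - 1) - p" if "x > -1" for x
    unfolding g_def using that
    by (auto intro!: derivative_eq_intros simp: algebra_simps)
  have g0: "g 0 = 0" by (simp add: g_def)
  show ?thesis
  proof (cases "h = -1")
    case True then show ?thesis using p by simp
  next
    case False
    then have hm: "h > -1" using h by simp
    show ?thesis
    proof (cases "h > 0")
      case True
      obtain z where z: "0 < z" "z < h" "g h - g 0 = (h - 0) * (p * (1 + z) powr (p - 1) - p)"
        using MVT2[of 0 h g "\<lambda>x. p * (1 + x) powr (p - 1) - p"] True D by force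
      have "1 < (1 + z) powr (p - 1)" using z p by (intro gr_one_powr) auto
      then have "p * (1 + z) powr (p - 1) - p > 0" using p by simp
      then have "g h > 0" using z True g0 by simp
      then show ?thesis by (simp add: g_def)
    next
      case False
      then have hn: "h < 0" using h by simp
      obtain z where z: "h < z" "z < 0" "g 0 - g h = (0 - h) * (p * (1 + z) powr (p - 1) - p)"
      proof -
        have "\<exists>z. h < z \<and> z < 0 \<and> g 0 - g h = (0 - h) * (p * (1 + z) powr (p - 1) - p)"
        proof (rule MVT2[of h 0 g "\<lambda>x. p * (1 + x) powr (p - 1) - p"])
          show "h < 0" by fact
          fix x assume "h \<le> x" "x \<le> 0" then show "DERIV g x :> p * (1 + x) powr (p - 1) - p"
            using hm by (intro D) simp
        qed
        then show ?thesis using that by blast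
      qed
      have "(1 + z) powr (p - 1) < 1 powr (p - 1)" using z p hm by (intro powr_less_mono2) auto
      then have "p * (1 + z) powr (p - 1) - p < 0" using p by simp
      then have "h * (p * (1 + z) powr (p - 1) - p) > 0" using hn by (simp add: mult_neg_neg)
      then have "g h > 0" using z g0 by simp
      then show ?thesis by (simp add: g_def)
    qed
  qed
qed

lemma bern:
  fixes p h :: real
  assumes p: "p \<ge> 1" and h: "h \<ge> -1"
  shows "1 + p * h \<le> (1 + h) powr p"
proof (cases "p = 1 \<or> h = 0")
  case True then show ?thesis using h by auto
next
  case False then show ?thesis using bern_strict[of p h] p h by fastforce
qed

lemma tangent:
  fixes p m w :: real
  assumes p: "p \<ge> 1" and m: "m > 0" and w: "w \<ge> 0"
  shows "m powr p + p * m powr (p - 1) * (w - m) \<le> w powr p"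
    and "p > 1 \<Longrightarrow> w \<noteq> m \<Longrightarrow> m powr p + p * m powr (p - 1) * (w - m) < w powr p"
proof -
  define h where "h = w / m - 1"
  have h1: "h \<ge> -1" using m w by (simp add: h_def)
  have wm: "w = m * (1 + h)" using m by (simp add: h_def)
  have e1: "w powr p = m powr p * (1 + h) powr p"
    using wm m h1 by (simp add: powr_mult)
  have e2: "m powr p + p * m powr (p - 1) * (w - m) = m powr p * (1 + p * h)"
    using m by (simp add: wm powr_diff algebra_simps)
  show "m powr p + p * m powr (p - 1) * (w - m) \<le> w powr p"
    unfolding e1 e2 using bern[OF p h1] m by (simp add: mult_left_mono)
  assume "p > 1" "w \<noteq> m"
  then have "h \<noteq> 0" using m by (simp add: h_def)
  then show "m powr p + p * m powr (p - 1) * (w - m) < w powr p"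
    unfolding e1 e2 using bern_strict[OF \<open>p>1\<close> h1] m by simp
qed

lemma pw_aux:
  fixes a x p :: real assumes "a > 0" "x \<ge> 0"
  shows "a * (x / a) powr p = x powr p / a powr (p - 1)"
  using assms by (simp add: powr_divide powr_diff field_simps)

lemma pw_mp:
  fixes a x p :: real assumes "a > 0" "x \<ge> 0"
  shows "(a * x) powr p = a powr (p - 1) * (a * x powr p)"
  using assms by (simp add: powr_mult powr_diff field_simps)

lemma pw:
  fixes p a b x y :: real
  assumes p: "p \<ge> 1" and a: "a > 0" and b: "b > 0" and x: "x \<ge> 0" and y: "y \<ge> 0"
  shows "(x + y) powr p \<le> (a + b) powr (p - 1) * (x powr p / a powr (p - 1) + y powr p / b powr (p - 1))"
    and "p > 1 \<Longrightarrow> (x + y) powr p = (a + b) powr (p - 1) * (x powr p / a powr (p - 1) + y powr p / b powr (p - 1))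
          \<Longrightarrow> x * b = y * a"
proof -
  define m where "m = (x + y) / (a + b)"
  define u where "u = x / a"
  define v where "v = y / b"
  have xy: "x + y = (a + b) * m" using a b by (simp add: m_def)
  have au: "a * u = x" "b * v = y" using a b by (simp_all add: u_def v_def)
  have uv: "u \<ge> 0" "v \<ge> 0" using a b x y by (simp_all add: u_def v_def)
  have rhs: "(a + b) powr (p - 1) * (x powr p / a powr (p - 1) + y powr p / b powr (p - 1))
     = (a + b) powr (p - 1) * (a * u powr p + b * v powr p)"
    using pw_aux[OF a x, of p] pw_aux[OF b y, of p] by (simp add: u_def v_def)
  have lhs: "(x + y) powr p = (a + b) powr (p - 1) * ((a + b) * m powr p)"
    unfolding xy using a b by (intro pw_mp) (auto simp: m_def x y)
  have ab: "(a + b) powr (p - 1) > 0" using a b by simp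
  show 1: "(x + y) powr p \<le> (a + b) powr (p - 1) * (x powr p / a powr (p - 1) + y powr p / b powr (p - 1))"
  proof (cases "m = 0")
    case True
    then have "x = 0" "y = 0" using x y a b by (auto simp: m_def divide_eq_0_iff)
    then show ?thesis using p by simp
  next
    case False
    then have m: "m > 0" using x y a b by (simp add: m_def)
    have t1: "m powr p + p * m powr (p - 1) * (u - m) \<le> u powr p" using tangent(1)[OF p m uv(1)] .
    have t2: "m powr p + p * m powr (p - 1) * (v - m) \<le> v powr p" using tangent(1)[OF p m uv(2)] .
    have "a * (m powr p + p * m powr (p - 1) * (u - m)) + b * (m powr p + p * m powr (p - 1) * (v - m))
        = (a + b) * m powr p + p * m powr (p - 1) * (a * u + b * v - (a + b) * m)"
      by (simp add: algebra_simps)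
    moreover have "a * u + b * v - (a + b) * m = 0" using au xy by simp
    moreover have "a * (m powr p + p * m powr (p - 1) * (u - m)) \<le> a * u powr p"
      using t1 a by (intro mult_left_mono) auto
    moreover have "b * (m powr p + p * m powr (p - 1) * (v - m)) \<le> b * v powr p"
      using t2 b by (intro mult_left_mono) auto
    ultimately have "(a + b) * m powr p \<le> a * u powr p + b * v powr p"
      by simp
    then show ?thesis unfolding lhs rhs using ab by (simp add: mult_left_mono)
  qed
  assume p1: "p > 1" and eq: "(x + y) powr p = (a + b) powr (p - 1) * (x powr p / a powr (p - 1) + y powr p / b powr (p - 1))"
  show "x * b = y * a"
  proof (cases "m = 0")
    case True
    then have "x = 0" "y = 0" using x y a b by (auto simp: m_def divide_eq_0_iff)
    then show ?thesis by simp
  next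
    case False
    then have m: "m > 0" using x y a b by (simp add: m_def)
    have e2: "(a + b) * m powr p = a * u powr p + b * v powr p"
      using eq unfolding lhs rhs using ab by simp
    have "u = m \<and> v = m"
    proof (rule ccontr)
      assume ne: "\<not> (u = m \<and> v = m)"
      have t1: "m powr p + p * m powr (p - 1) * (u - m) \<le> u powr p" using tangent(1)[OF _ m uv(1)] p by simp
      have t2: "m powr p + p * m powr (p - 1) * (v - m) \<le> v powr p" using tangent(1)[OF _ m uv(2)] p by simp
      have s: "a * (m powr p + p * m powr (p - 1) * (u - m)) + b * (m powr p + p * m powr (p - 1) * (v - m))
          < a * u powr p + b * v powr p"
      proof (cases "u = m")
        case True
        then have "v \<noteq> m" using ne by simp
        then have "m powr p + p * m powr (p - 1) * (v - m) < v powr p" using tangent(2)[OF _ m uv(2) p1] p by simp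
        then show ?thesis using mult_left_mono[OF t1, of a] mult_strict_left_mono[of _ _ b] a b
          by (smt (verit))
      next
        case False
        then have "m powr p + p * m powr (p - 1) * (u - m) < u powr p" using tangent(2)[OF _ m uv(1) p1] p by simp
        then show ?thesis using mult_left_mono[OF t2, of b] mult_strict_left_mono[of _ _ a] a b
          by (smt (verit))
      qed
      have "a * (m powr p + p * m powr (p - 1) * (u - m)) + b * (m powr p + p * m powr (p - 1) * (v - m))
        = (a + b) * m powr p + p * m powr (p - 1) * (a * u + b * v - (a + b) * m)"
        by (simp add: algebra_simps)
      also have "a * u + b * v - (a + b) * m = 0" using au xy by simp
      finally show False using s e2 by simp
    qed
    then show ?thesis using a b unfolding u_def v_def by (simp add: field_simps)
  qed
qed




locale cs =
  fixes C :: "'a::euclidean_space set" and Th :: "'a \<Rightarrow> real" and q :: real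
  assumes pc: "pointed_cone C" and q0: "0 \<le> q" and q1: "q \<le> real DIM('a) - 1"
    and cont: "continuous_on (C - {0}) Th" and pos: "\<forall>x\<in>C - {0}. Th x > 0"
    and hom: "\<forall>x\<in>C - {0}. \<forall>t::real. t > 0 \<longrightarrow> Th (t *\<^sub>R x) = t powr (- q) * Th x"
begin

definition "p = real DIM('a) - q"

lemma p1: "p \<ge> 1" using q1 by (simp add: p_def)
lemma p0: "p > 0" using p1 by simp

definition W :: "'a \<Rightarrow> ennreal" where "W x = ennreal (Th x) * indicator (C - {0}) x"

lemma C_closed: "closed C" and C_convex: "convex C" and C_cone: "cone C" and C_int: "interior C \<noteq> {}"
  using pc by (auto simp: pointed_cone_def)

lemma C_scale: "x \<in> C - {0} \<Longrightarrow> t > 0 \<Longrightarrow> t *\<^sub>R x \<in> C - {0}"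
  using C_cone by (auto simp: cone_def)

lemma C_scale_iff: "t > 0 \<Longrightarrow> t *\<^sub>R x \<in> C - {0} \<longleftrightarrow> x \<in> C - {0}"
proof
  assume t: "t > 0" and "t *\<^sub>R x \<in> C - {0}"
  then show "x \<in> C - {0}" using C_scale[of "t *\<^sub>R x" "inverse t"] by auto
qed (rule C_scale)

lemma C0_borel[measurable]: "C - {0} \<in> sets borel"
  using C_closed by (intro sets.Diff) (auto intro: borel_closed)

lemma W_meas[measurable]: "W \<in> borel_measurable borel"
proof -
  have "(\<lambda>x. indicator (C - {0}) x *\<^sub>R Th x) \<in> borel_measurable borel"
    using cont by (intro borel_measurable_continuous_on_indicator) auto
  then have "(\<lambda>x. ennreal (indicator (C - {0}) x *\<^sub>R Th x)) \<in> borel_measurable borel"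
    by measurable
  moreover have "(\<lambda>x. ennreal (indicator (C - {0}) x *\<^sub>R Th x)) = W"
    by (auto simp: W_def fun_eq_iff indicator_def)
  ultimately show ?thesis by simp
qed

lemma W_scale: "t > 0 \<Longrightarrow> W (t *\<^sub>R x) = ennreal (t powr (- q)) * W x"
proof (cases "x \<in> C - {0}")
  case True
  assume t: "t > 0"
  have "Th x > 0" using pos True by auto
  then show ?thesis using True t hom C_scale[OF True t]
    by (simp add: W_def ennreal_mult)
next
  case False
  assume t: "t > 0"
  then show ?thesis using False C_scale_iff[OF t, of x] by (simp add: W_def)
qed

lemma W_pos: "x \<in> C - {0} \<Longrightarrow> W x > 0"
  using pos by (simp add: W_def)

lemma W_zero: "x \<notin> C - {0} \<Longrightarrow> W x = 0"
  by (simp add: W_def)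

lemma lborel_scale:
  fixes g :: "'a \<Rightarrow> ennreal"
  assumes [measurable]: "g \<in> borel_measurable borel" and c: "c > 0"
  shows "(\<integral>\<^sup>+x. g x \<partial>lborel) = ennreal (c ^ DIM('a)) * (\<integral>\<^sup>+x. g (c *\<^sub>R x) \<partial>lborel)"
proof -
  have L: "(lborel::'a measure) = density (distr lborel borel ((*\<^sub>R) c)) (\<lambda>_. ennreal (c ^ DIM('a)))"
    using lborel_affine[of c "0::'a"] c by simp
  have "(\<integral>\<^sup>+x. g x \<partial>lborel) = (\<integral>\<^sup>+x. g x \<partial>density (distr lborel borel ((*\<^sub>R) c)) (\<lambda>_. ennreal (c ^ DIM('a))))"
    by (simp only: L[symmetric])
  also have "\<dots> = (\<integral>\<^sup>+x. ennreal (c ^ DIM('a)) * g x \<partial>distr lborel borel ((*\<^sub>R) c))"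
    by (subst nn_integral_density) auto
  also have "\<dots> = (\<integral>\<^sup>+x. ennreal (c ^ DIM('a)) * g (c *\<^sub>R x) \<partial>lborel)"
    by (subst nn_integral_distr) auto
  also have "\<dots> = ennreal (c ^ DIM('a)) * (\<integral>\<^sup>+x. g (c *\<^sub>R x) \<partial>lborel)"
    using c by (subst nn_integral_cmult) auto
  finally show ?thesis .
qed

lemma scale:
  fixes f :: "'a \<Rightarrow> ennreal"
  assumes [measurable]: "f \<in> borel_measurable borel" and c: "c > 0"
  shows "(\<integral>\<^sup>+x. W x * f x \<partial>lborel) = ennreal (c powr p) * (\<integral>\<^sup>+x. W x * f (c *\<^sub>R x) \<partial>lborel)"
proof -
  have "(\<integral>\<^sup>+x. W x * f x \<partial>lborel) = ennreal (c ^ DIM('a)) * (\<integral>\<^sup>+x. W (c *\<^sub>R x) * f (c *\<^sub>R x) \<partial>lborel)"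
    using c by (intro lborel_scale) auto
  also have "(\<integral>\<^sup>+x. W (c *\<^sub>R x) * f (c *\<^sub>R x) \<partial>lborel) = (\<integral>\<^sup>+x. ennreal (c powr (- q)) * (W x * f (c *\<^sub>R x)) \<partial>lborel)"
    using c by (simp add: W_scale mult.assoc)
  also have "\<dots> = ennreal (c powr (- q)) * (\<integral>\<^sup>+x. W x * f (c *\<^sub>R x) \<partial>lborel)"
    using c by (subst nn_integral_cmult) auto
  also have "ennreal (c ^ DIM('a)) * (ennreal (c powr (- q)) * (\<integral>\<^sup>+x. W x * f (c *\<^sub>R x) \<partial>lborel))
     = ennreal (c ^ DIM('a) * c powr (- q)) * (\<integral>\<^sup>+x. W x * f (c *\<^sub>R x) \<partial>lborel)"
    using c by (simp add: ennreal_mult mult.assoc)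
  also have "c ^ DIM('a) * c powr (- q) = c powr p"
    using c by (simp add: p_def powr_realpow[symmetric] powr_add[symmetric])
  finally show ?thesis .
qed

end



context cs begin

definition deg0 :: "('a \<Rightarrow> 'b) \<Rightarrow> bool" where
  "deg0 g \<longleftrightarrow> (\<forall>x\<in>C - {0}. \<forall>t::real. t > 0 \<longrightarrow> g (t *\<^sub>R x) = g x)"

lemma lemA:
  fixes g :: "'a \<Rightarrow> ennreal"
  assumes [measurable]: "g \<in> borel_measurable borel" and d: "deg0 g" and c: "c \<ge> 0"
  shows "(\<integral>\<^sup>+x. W x * g x * indicator {x. norm x < c} x \<partial>lborel)
       = ennreal (c powr p) * (\<integral>\<^sup>+x. W x * g x * indicator {x. norm x < 1} x \<partial>lborel)"
proof (cases "c = 0")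
  case True then show ?thesis by simp
next
  case False
  then have c: "c > 0" using c by simp
  have "(\<integral>\<^sup>+x. W x * g x * indicator {x. norm x < c} x \<partial>lborel)
      = (\<integral>\<^sup>+x. W x * (g x * indicator {x. norm x < c} x) \<partial>lborel)"
    by (simp add: mult.assoc)
  also have "\<dots> = ennreal (c powr p) * (\<integral>\<^sup>+x. W x * (g (c *\<^sub>R x) * indicator {x. norm x < c} (c *\<^sub>R x)) \<partial>lborel)"
    using c by (intro scale) auto
  also have "(\<integral>\<^sup>+x. W x * (g (c *\<^sub>R x) * indicator {x. norm x < c} (c *\<^sub>R x)) \<partial>lborel)
      = (\<integral>\<^sup>+x. W x * g x * indicator {x. norm x < 1} x \<partial>lborel)"
  proof (intro nn_integral_cong)
    fix x :: 'a
    show "W x * (g (c *\<^sub>R x) * indicator {x. norm x < c} (c *\<^sub>R x)) = W x * g x * indicator {x. norm x < 1} x"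
    proof (cases "x \<in> C - {0}")
      case True
      then have "g (c *\<^sub>R x) = g x" using d c by (auto simp: deg0_def)
      moreover have "norm (c *\<^sub>R x) < c \<longleftrightarrow> norm x < 1" using c by simp
      ultimately show ?thesis by (simp add: indicator_def mult.assoc)
    qed (simp add: W_zero)
  qed
  finally show ?thesis .
qed

lemma SUP_indicator_ennreal:
  fixes f :: "nat \<Rightarrow> ennreal"
  assumes "\<And>k. f k = 0 \<or> f k = 1" "(\<exists>k. f k = 1) \<longleftrightarrow> P"
  shows "(SUP k. f k) = (if P then 1 else 0)"
proof (cases P)
  case True
  then obtain k where "f k = 1" using assms by blast
  then have "(SUP k. f k) \<ge> 1" by (metis UNIV_I SUP_upper)
  moreover have "(SUP k. f k) \<le> 1" using assms(1) by (intro SUP_least) (metis order.refl zero_le)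
  ultimately show ?thesis using True by simp
next
  case False
  then have "\<And>k. f k = 0" using assms by blast
  then show ?thesis using False by simp
qed

lemma disint:
  fixes R :: "'a \<Rightarrow> real"
  assumes Rm[measurable]: "R \<in> borel_measurable borel" and R0: "\<And>x. R x \<ge> 0" and d: "deg0 R"
  shows "(\<integral>\<^sup>+x. W x * indicator {x. norm x < R x} x \<partial>lborel)
       = (\<integral>\<^sup>+x. W x * indicator {x. norm x < 1} x * ennreal (R x powr p) \<partial>lborel)"
proof -
  define N where "N k x = nat (min (int (k * 2 ^ k)) \<lfloor>2 ^ k * R x\<rfloor>)" for k x
  define Rk where "Rk k x = real (N k x) / 2 ^ k" for k x
  have Nm[measurable]: "N k \<in> borel \<rightarrow>\<^sub>M count_space UNIV" for k
    unfolding N_def by measurable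
  have Rkm[measurable]: "Rk k \<in> borel_measurable borel" for k
    unfolding Rk_def by measurable
  have Rk_eq: "Rk k x = min (real k) (real_of_int \<lfloor>2 ^ k * R x\<rfloor> / 2 ^ k)" for k x
  proof -
    have f0: "\<lfloor>2 ^ k * R x\<rfloor> \<ge> 0" using R0[of x] by simp
    show ?thesis
    proof (cases "\<lfloor>2 ^ k * R x\<rfloor> \<le> int (k * 2 ^ k)")
      case True
      then have "real_of_int \<lfloor>2 ^ k * R x\<rfloor> \<le> real_of_int (int (k * 2 ^ k))"
        by (simp only: of_int_le_iff)
      then have "real_of_int \<lfloor>2 ^ k * R x\<rfloor> \<le> real k * 2 ^ k" by simp
      then have "real_of_int \<lfloor>2 ^ k * R x\<rfloor> / 2 ^ k \<le> real k"
        by (simp add: pos_divide_le_eq)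
      then show ?thesis using True f0 by (simp add: Rk_def N_def min_def)
    next
      case False
      then have "real_of_int \<lfloor>2 ^ k * R x\<rfloor> \<ge> real_of_int (int (k * 2 ^ k))"
        by (simp only: of_int_le_iff not_le less_imp_le)
      then have "real_of_int \<lfloor>2 ^ k * R x\<rfloor> \<ge> real k * 2 ^ k" by simp
      then have "real_of_int \<lfloor>2 ^ k * R x\<rfloor> / 2 ^ k \<ge> real k"
        by (simp add: pos_le_divide_eq)
      then show ?thesis using False f0 by (simp add: Rk_def N_def min_def)
    qed
  qed
  have Rk_le: "Rk k x \<le> R x" for k x
  proof -
    have "real_of_int \<lfloor>2 ^ k * R x\<rfloor> \<le> 2 ^ k * R x" by simp
    then have "real_of_int \<lfloor>2 ^ k * R x\<rfloor> / 2 ^ k \<le> R x" by (simp add: divide_le_eq mult.commute)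
    then show ?thesis unfolding Rk_eq by simp
  qed
  have Rk_ge0: "Rk k x \<ge> 0" for k x by (simp add: Rk_def)
  have Rk_mono: "Rk k x \<le> Rk (Suc k) x" for k x
  proof -
    have "2 * real_of_int \<lfloor>2 ^ k * R x\<rfloor> \<le> real_of_int \<lfloor>2 ^ Suc k * R x\<rfloor>"
    proof -
      have "2 * \<lfloor>2 ^ k * R x\<rfloor> \<le> \<lfloor>2 ^ Suc k * R x\<rfloor>"
        by (simp add: le_floor_iff) 
      then show ?thesis by (metis of_int_le_iff of_int_mult of_int_numeral)
    qed
    then have "real_of_int \<lfloor>2 ^ k * R x\<rfloor> / 2 ^ k \<le> real_of_int \<lfloor>2 ^ Suc k * R x\<rfloor> / 2 ^ Suc k"
      by (simp add: field_simps)
    then show ?thesis unfolding Rk_eq by linarith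
  qed
  have Rk_lim: "(\<lambda>k. Rk k x) \<longlonglongrightarrow> R x" for x
  proof (rule real_tendsto_sandwich[of "\<lambda>k. R x - 1 / 2 ^ k" _ _ "\<lambda>_. R x"])
    have "eventually (\<lambda>k. real k \<ge> R x) sequentially"
    proof -
      obtain n where n: "R x \<le> real n" using real_arch_simple by blast
      show ?thesis unfolding eventually_sequentially
        by (rule exI[of _ n]) (use n in \<open>auto intro: order.trans\<close>)
    qed
    then show "eventually (\<lambda>k. R x - 1 / 2 ^ k \<le> Rk k x) sequentially"
    proof (rule eventually_mono)
      fix k assume k: "R x \<le> real k"
      have "2 ^ k * R x - 1 \<le> real_of_int \<lfloor>2 ^ k * R x\<rfloor>" by linarith
      then have "(2 ^ k * R x - 1) / 2 ^ k \<le> real_of_int \<lfloor>2 ^ k * R x\<rfloor> / 2 ^ k"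
        by (intro divide_right_mono) auto
      moreover have "(2 ^ k * R x - 1) / 2 ^ k = R x - 1 / 2 ^ k"
        by (simp add: diff_divide_distrib)
      ultimately have "R x - 1 / 2 ^ k \<le> real_of_int \<lfloor>2 ^ k * R x\<rfloor> / 2 ^ k" by simp
      moreover have "(0::real) \<le> 1 / 2 ^ k" by simp
      ultimately show "R x - 1 / 2 ^ k \<le> Rk k x" unfolding Rk_eq using k by linarith
    qed
    show "eventually (\<lambda>k. Rk k x \<le> R x) sequentially" using Rk_le by simp
    have "(\<lambda>k. R x - 1 / 2 ^ k) \<longlonglongrightarrow> R x - 0"
      by (intro tendsto_intros LIMSEQ_divide_realpow_zero) auto
    then show "(\<lambda>k. R x - 1 / 2 ^ k) \<longlonglongrightarrow> R x" by simp
  qed simp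
  have dRk: "deg0 (Rk k)" for k using d by (simp add: deg0_def Rk_def N_def)
  have dN: "deg0 (N k)" for k using d by (simp add: deg0_def N_def)
  text \<open>finite step\<close>
  have fin: "(\<integral>\<^sup>+x. W x * indicator {x. norm x < Rk k x} x \<partial>lborel)
       = (\<integral>\<^sup>+x. W x * indicator {x. norm x < 1} x * ennreal (Rk k x powr p) \<partial>lborel)" for k
  proof -
    define J where "J = {..k * 2 ^ k}"
    define v where "v j = real j / 2 ^ k" for j :: nat
    have NJ: "N k x \<in> J" for x
    proof -
      have "N k x \<le> nat (int (k * 2 ^ k))" unfolding N_def by (intro nat_mono) simp
      then show ?thesis by (simp only: J_def nat_int atMost_iff)
    qed
    have "(\<integral>\<^sup>+x. W x * indicator {x. norm x < Rk k x} x \<partial>lborel)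
        = (\<integral>\<^sup>+x. (\<Sum>j\<in>J. W x * indicator {x. N k x = j} x * indicator {x. norm x < v j} x) \<partial>lborel)"
    proof (intro nn_integral_cong)
      fix x
      have "(\<Sum>j\<in>J. W x * indicator {x. N k x = j} x * indicator {x. norm x < v j} x)
          = (\<Sum>j\<in>J. if N k x = j then W x * indicator {x. norm x < v j} x else 0)"
        by (intro sum.cong) (auto simp: indicator_def)
      also have "\<dots> = W x * indicator {y. norm y < v (N k x)} x"
        using NJ[of x] by (simp add: sum.delta' J_def)
      finally show "W x * indicator {x. norm x < Rk k x} x = (\<Sum>j\<in>J. W x * indicator {x. N k x = j} x * indicator {x. norm x < v j} x)"
        by (simp add: v_def Rk_def indicator_def)
    qed
    also have "\<dots> = (\<Sum>j\<in>J. (\<integral>\<^sup>+x. W x * indicator {x. N k x = j} x * indicator {x. norm x < v j} x \<partial>lborel))"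
      by (intro nn_integral_sum) auto
    also have "\<dots> = (\<Sum>j\<in>J. ennreal (v j powr p) * (\<integral>\<^sup>+x. W x * indicator {x. N k x = j} x * indicator {x. norm x < 1} x \<partial>lborel))"
    proof (intro sum.cong refl lemA)
      fix j
      show "deg0 (indicator {x. N k x = j} :: 'a \<Rightarrow> ennreal)"
        using dN by (simp add: deg0_def indicator_def)
    qed (auto simp: v_def)
    also have "\<dots> = (\<Sum>j\<in>J. (\<integral>\<^sup>+x. W x * indicator {x. norm x < 1} x * (indicator {x. N k x = j} x * ennreal (v j powr p)) \<partial>lborel))"
      by (intro sum.cong refl, subst nn_integral_cmult[symmetric]) (auto intro!: nn_integral_cong simp: mult_ac)
    also have "\<dots> = (\<integral>\<^sup>+x. (\<Sum>j\<in>J. W x * indicator {x. norm x < 1} x * (indicator {x. N k x = j} x * ennreal (v j powr p))) \<partial>lborel)"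
      by (intro nn_integral_sum[symmetric]) auto
    also have "\<dots> = (\<integral>\<^sup>+x. W x * indicator {x. norm x < 1} x * ennreal (Rk k x powr p) \<partial>lborel)"
    proof (intro nn_integral_cong)
      fix x
      have "(\<Sum>j\<in>J. W x * indicator {x. norm x < 1} x * (indicator {x. N k x = j} x * ennreal (v j powr p)))
          = (\<Sum>j\<in>J. if N k x = j then W x * indicator {x. norm x < 1} x * ennreal (v j powr p) else 0)"
        by (intro sum.cong) (auto simp: indicator_def)
      also have "\<dots> = W x * indicator {x. norm x < 1} x * ennreal (v (N k x) powr p)"
        using NJ[of x] by (simp add: sum.delta' J_def)
      finally show "(\<Sum>j\<in>J. W x * indicator {x. norm x < 1} x * (indicator {x. N k x = j} x * ennreal (v j powr p)))
          = W x * indicator {x. norm x < 1} x * ennreal (Rk k x powr p)"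
        by (simp add: v_def Rk_def)
    qed
    finally show ?thesis .
  qed
  text \<open>limits\<close>
  have L: "(\<integral>\<^sup>+x. W x * indicator {x. norm x < R x} x \<partial>lborel)
      = (\<integral>\<^sup>+x. (SUP k. W x * indicator {x. norm x < Rk k x} x) \<partial>lborel)"
  proof (intro nn_integral_cong)
    fix x
    have "(SUP k. indicator {x. norm x < Rk k x} x :: ennreal) = (if norm x < R x then 1 else 0)"
    proof (rule SUP_indicator_ennreal)
      show "(\<exists>k. (indicator {x. norm x < Rk k x} x :: ennreal) = 1) \<longleftrightarrow> norm x < R x"
      proof
        assume "\<exists>k. (indicator {x. norm x < Rk k x} x :: ennreal) = 1"
        then obtain k where "norm x < Rk k x" by (auto simp: indicator_def split: if_splits)
        then show "norm x < R x" using Rk_le[of k x] by simp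
      next
        assume "norm x < R x"
        then have "eventually (\<lambda>k. norm x < Rk k x) sequentially"
          using Rk_lim[of x] by (simp add: order_tendsto_iff)
        then obtain k where "norm x < Rk k x" by (auto simp: eventually_sequentially)
        then show "\<exists>k. (indicator {x. norm x < Rk k x} x :: ennreal) = 1"
          by (intro exI[of _ k]) (simp add: indicator_def)
      qed
    qed (auto simp: indicator_def)
    then show "W x * indicator {x. norm x < R x} x = (SUP k. W x * indicator {x. norm x < Rk k x} x)"
      by (simp add: SUP_mult_left_ennreal[symmetric] indicator_def)
  qed
  also have "\<dots> = (SUP k. (\<integral>\<^sup>+x. W x * indicator {x. norm x < Rk k x} x \<partial>lborel))"
  proof (rule nn_integral_monotone_convergence_SUP)
    show "incseq (\<lambda>k x. W x * indicator {x. norm x < Rk k x} x)"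
    proof (intro incseq_SucI le_funI)
      fix k x
      show "W x * indicator {x. norm x < Rk k x} x \<le> W x * indicator {x. norm x < Rk (Suc k) x} x"
        using Rk_mono[of k x] by (auto intro!: mult_left_mono simp: indicator_def)
    qed
  qed auto
  also have "\<dots> = (SUP k. (\<integral>\<^sup>+x. W x * indicator {x. norm x < 1} x * ennreal (Rk k x powr p) \<partial>lborel))"
    using fin by simp
  also have "\<dots> = (\<integral>\<^sup>+x. (SUP k. W x * indicator {x. norm x < 1} x * ennreal (Rk k x powr p)) \<partial>lborel)"
  proof (rule nn_integral_monotone_convergence_SUP[symmetric])
    show "incseq (\<lambda>k x. W x * indicator {x. norm x < 1} x * ennreal (Rk k x powr p))"
    proof (intro incseq_SucI le_funI)
      fix k x
      have "Rk k x powr p \<le> Rk (Suc k) x powr p"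
        using Rk_mono[of k x] Rk_ge0[of k x] p0 by (intro powr_mono2) auto
      then show "W x * indicator {x. norm x < 1} x * ennreal (Rk k x powr p) \<le> W x * indicator {x. norm x < 1} x * ennreal (Rk (Suc k) x powr p)"
        by (intro mult_left_mono) auto
    qed
  qed auto
  also have "\<dots> = (\<integral>\<^sup>+x. W x * indicator {x. norm x < 1} x * ennreal (R x powr p) \<partial>lborel)"
  proof (intro nn_integral_cong)
    fix x
    have inc: "incseq (\<lambda>k. ennreal (Rk k x powr p))"
    proof (intro incseq_SucI)
      fix k
      show "ennreal (Rk k x powr p) \<le> ennreal (Rk (Suc k) x powr p)"
        using Rk_mono[of k x] Rk_ge0[of k x] p0 by (intro ennreal_leI powr_mono2) auto
    qed
    have "(\<lambda>k. ennreal (Rk k x powr p)) \<longlonglongrightarrow> ennreal (R x powr p)"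
    proof (intro tendsto_ennrealI tendsto_powr')
      show "(\<lambda>k. Rk k x) \<longlonglongrightarrow> R x" by (rule Rk_lim)
    qed (use p0 Rk_ge0 in auto)
    then have "(SUP k. ennreal (Rk k x powr p)) = ennreal (R x powr p)"
      using LIMSEQ_SUP[OF inc] LIMSEQ_unique by blast
    then show "(SUP k. W x * indicator {x. norm x < 1} x * ennreal (Rk k x powr p)) = W x * indicator {x. norm x < 1} x * ennreal (R x powr p)"
      by (simp add: SUP_mult_left_ennreal[symmetric])
  qed
  finally show ?thesis .
qed

end



context cs begin

lemma pcD: assumes "pseudo_cone C E"
  shows "closed E" "convex E" "0 \<notin> E" "E \<noteq> {}" "\<And>x l. x \<in> E \<Longrightarrow> l \<ge> 1 \<Longrightarrow> l *\<^sub>R x \<in> E"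
    "rec_cone E = C"
  using assms by (auto simp: pseudo_cone_def)

lemma pc_rec: "pseudo_cone C E \<Longrightarrow> x \<in> C \<Longrightarrow> y \<in> E \<Longrightarrow> y + x \<in> E"
  using pcD(6)[of E] by (auto simp: rec_cone_def)

lemma pc_sub: assumes E: "pseudo_cone C E" shows "E \<subseteq> C"
proof
  fix y assume y: "y \<in> E"
  have "y \<in> rec_cone E" unfolding rec_cone_def
  proof (intro CollectI ballI)
    fix z assume z: "z \<in> E"
    define s where "s k = (1 - inverse (real (Suc k))) *\<^sub>R z + y" for k
    have "s k \<in> E" for k
    proof -
      have "(1 - inverse (real (Suc k))) *\<^sub>R z + inverse (real (Suc k)) *\<^sub>R (real (Suc k) *\<^sub>R y) \<in> E"
      proof (rule convexD[OF pcD(2)[OF E] z])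
        show "real (Suc k) *\<^sub>R y \<in> E" using pcD(5)[OF E y, of "real (Suc k)"] by simp
        show "0 \<le> 1 - inverse (real (Suc k))" by (simp add: inverse_le_1_iff)
      qed simp_all
      then show ?thesis by (simp add: s_def)
    qed
    moreover have "s \<longlonglongrightarrow> (1 - 0) *\<^sub>R z + y"
    proof -
      have "(\<lambda>k. 1 - inverse (real (Suc k))) \<longlonglongrightarrow> 1 - 0"
        by (intro tendsto_diff tendsto_const LIMSEQ_inverse_real_of_nat)
      then show ?thesis unfolding s_def by (intro tendsto_add tendsto_scaleR tendsto_const)
    qed
    ultimately show "z + y \<in> E" using closed_sequentially[OF pcD(1)[OF E], of s "z + y"] by simp
  qed
  then show "y \<in> C" using pcD(6)[OF E] by simp
qed

lemma pc_delta: assumes E: "pseudo_cone C E" shows "\<exists>d>0. \<forall>x\<in>E. d \<le> norm x"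
proof -
  have "open (- E)" using pcD(1)[OF E] by auto
  moreover have "0 \<in> - E" using pcD(3)[OF E] by auto
  ultimately obtain d where d: "d > 0" "ball 0 d \<subseteq> - E" using open_contains_ball by blast
  have "d \<le> norm x" if "x \<in> E" for x
  proof (rule ccontr)
    assume "\<not> d \<le> norm x"
    then have "x \<in> ball 0 d" by simp
    then show False using d that by blast
  qed
  then show ?thesis using d by blast
qed

lemma pc_int: assumes E: "pseudo_cone C E" shows "interior E \<noteq> {}"
proof -
  obtain z where z: "z \<in> interior C" using C_int by auto
  then obtain e where e: "e > 0" "ball z e \<subseteq> C" using mem_interior by blast
  obtain y where y: "y \<in> E" using pcD(4)[OF E] by auto
  have "ball (y + z) e \<subseteq> E"
  proof
    fix w assume "w \<in> ball (y + z) e"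
    then have "w - y \<in> ball z e" by (simp add: dist_norm algebra_simps)
    then have "y + (w - y) \<in> E" using e y pc_rec[OF E] by blast
    then show "w \<in> E" by simp
  qed
  then have "ball (y + z) e \<subseteq> interior E" by (intro interior_maximal) auto
  then have "y + z \<in> interior E" using e by auto
  then show ?thesis by auto
qed

definition T :: "'a set \<Rightarrow> 'a \<Rightarrow> real set" where "T E x = {t. t > 0 \<and> t *\<^sub>R x \<in> E}"
definition rho :: "'a set \<Rightarrow> 'a \<Rightarrow> real" where "rho E x = (if T E x = {} then 0 else Inf (T E x))"
definition Rr :: "'a set \<Rightarrow> 'a \<Rightarrow> real" where "Rr E x = norm x * rho E x"

lemma T_up: assumes E: "pseudo_cone C E" and t: "t \<in> T E x" and s: "s \<ge> t" shows "s \<in> T E x"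
proof -
  have t0: "t > 0" "t *\<^sub>R x \<in> E" using t by (auto simp: T_def)
  have "(s / t) *\<^sub>R (t *\<^sub>R x) \<in> E" using pcD(5)[OF E t0(2), of "s / t"] t0 s by simp
  moreover have "(s / t) *\<^sub>R (t *\<^sub>R x) = s *\<^sub>R x" using t0 by simp
  ultimately show ?thesis using t0 s by (simp add: T_def)
qed

lemma T_inf: assumes E: "pseudo_cone C E" and ne: "T E x \<noteq> {}"
  shows "rho E x \<in> T E x" "\<And>t. t \<in> T E x \<Longrightarrow> rho E x \<le> t"
proof -
  obtain d where d: "d > 0" "\<forall>x\<in>E. d \<le> norm x" using pc_delta[OF E] by blast
  obtain t0 where t0: "t0 \<in> T E x" using ne by auto
  have x0: "x \<noteq> 0" using t0 pcD(3)[OF E] by (auto simp: T_def)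
  have lb: "t \<ge> d / norm x" if "t \<in> T E x" for t
  proof -
    have "d \<le> norm (t *\<^sub>R x)" using that d by (auto simp: T_def)
    then show ?thesis using that x0 by (auto simp: T_def field_simps)
  qed
  have eq: "T E x = {t. d / norm x \<le> t} \<inter> (\<lambda>t. t *\<^sub>R x) -` E"
  proof (intro set_eqI iffI)
    fix t assume "t \<in> {t. d / norm x \<le> t} \<inter> (\<lambda>t. t *\<^sub>R x) -` E"
    moreover have "d / norm x > 0" using d x0 by simp
    ultimately show "t \<in> T E x" by (auto simp: T_def)
  qed (auto simp: T_def lb)
  have cl: "closed (T E x)" unfolding eq
    by (intro closed_Int closed_vimage pcD(1)[OF E]) (auto intro!: continuous_intros closed_Collect_le)
  have bdd: "bdd_below (T E x)" by (rule bdd_belowI[of _ 0]) (auto simp: T_def)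
  show "rho E x \<in> T E x" using closed_contains_Inf[OF ne bdd cl] ne by (simp add: rho_def)
  show "\<And>t. t \<in> T E x \<Longrightarrow> rho E x \<le> t" using bdd ne by (auto simp: rho_def intro: cInf_lower)
qed

lemma T_iff: assumes E: "pseudo_cone C E" and ne: "T E x \<noteq> {}"
  shows "t \<in> T E x \<longleftrightarrow> rho E x \<le> t" and "rho E x > 0"
proof -
  show "rho E x > 0" using T_inf(1)[OF E ne] by (simp add: T_def)
  show "t \<in> T E x \<longleftrightarrow> rho E x \<le> t" using T_inf[OF E ne] T_up[OF E] by blast
qed

lemma mem_iff: assumes E: "pseudo_cone C E" and ne: "T E x \<noteq> {}"
  shows "x \<in> E \<longleftrightarrow> rho E x \<le> 1"
  using T_iff(1)[OF E ne, of 1] by (simp add: T_def)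

lemma T_empty_notin: "T E x = {} \<Longrightarrow> x \<notin> E"
proof
  assume "T E x = {}" "x \<in> E"
  then have "1 \<in> T E x" by (simp add: T_def)
  then show False using \<open>T E x = {}\<close> by simp
qed

lemma T_scale: assumes s: "s > 0" shows "t \<in> T E (s *\<^sub>R x) \<longleftrightarrow> t * s \<in> T E x"
  using s by (auto simp: T_def zero_less_mult_iff)

lemma T_scale_ne: assumes s: "s > 0" shows "T E (s *\<^sub>R x) = {} \<longleftrightarrow> T E x = {}"
proof
  assume "T E (s *\<^sub>R x) = {}"
  show "T E x = {}"
  proof (rule ccontr)
    assume "T E x \<noteq> {}"
    then obtain t where t: "t \<in> T E x" by blast
    have "(t / s) * s = t" using s by simp
    then have "t / s \<in> T E (s *\<^sub>R x)" using T_scale[OF s, of "t / s" E x] t by simp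
    then show False using \<open>T E (s *\<^sub>R x) = {}\<close> by simp
  qed
next
  assume "T E x = {}"
  then show "T E (s *\<^sub>R x) = {}" using T_scale[OF s, of _ E x] by blast
qed

lemma rho_scale: assumes E: "pseudo_cone C E" and s: "s > 0"
  shows "rho E (s *\<^sub>R x) = rho E x / s"
proof (cases "T E x = {}")
  case True then show ?thesis using T_scale_ne[OF s] by (simp add: rho_def)
next
  case False
  then have ne2: "T E (s *\<^sub>R x) \<noteq> {}" using T_scale_ne[OF s] by simp
  have "t \<in> T E (s *\<^sub>R x) \<longleftrightarrow> rho E x / s \<le> t" for t
    using T_scale[OF s, of t E x] T_iff(1)[OF E False, of "t * s"] s by (simp add: divide_le_eq)
  then have H: "rho E (s *\<^sub>R x) \<le> t \<longleftrightarrow> rho E x / s \<le> t" for t using T_iff(1)[OF E ne2] by simp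
  show ?thesis using H[of "rho E x / s"] H[of "rho E (s *\<^sub>R x)"] by simp
qed

lemma rho_ge0: "pseudo_cone C E \<Longrightarrow> rho E x \<ge> 0"
  using T_iff(2)[of E x] by (cases "T E x = {}") (auto simp: rho_def)

lemma Rr_ge0: "pseudo_cone C E \<Longrightarrow> Rr E x \<ge> 0"
  using rho_ge0 by (simp add: Rr_def)

lemma Rr_deg0: assumes E: "pseudo_cone C E" shows "deg0 (Rr E)"
  unfolding deg0_def Rr_def using rho_scale[OF E] by auto

definition Ms :: "'a set \<Rightarrow> 'a set" where "Ms E = {x. T E x = {}}"

lemma Ms_deg0: "deg0 (indicator (Ms E) :: 'a \<Rightarrow> ennreal)"
  unfolding deg0_def Ms_def using T_scale_ne by (auto simp: indicator_def)

lemma G_eq: assumes E: "pseudo_cone C E" shows "{x. T E x \<noteq> {}} = (\<Union>n. {x. real (Suc n) *\<^sub>R x \<in> E})"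
proof (intro set_eqI iffI)
  fix x assume "x \<in> {x. T E x \<noteq> {}}"
  then obtain t where t: "t \<in> T E x" by auto
  obtain n where n: "t \<le> real n" using real_arch_simple by blast
  have "real (Suc n) \<in> T E x" using T_up[OF E t] n by simp
  then show "x \<in> (\<Union>n. {x. real (Suc n) *\<^sub>R x \<in> E})" by (auto simp: T_def)
next
  fix x assume "x \<in> (\<Union>n. {x. real (Suc n) *\<^sub>R x \<in> E})"
  then obtain n where "real (Suc n) *\<^sub>R x \<in> E" by auto
  then have "real (Suc n) \<in> T E x" by (simp add: T_def)
  then show "x \<in> {x. T E x \<noteq> {}}" by auto
qed

lemma G_borel: assumes E: "pseudo_cone C E" shows "{x. T E x \<noteq> {}} \<in> sets borel"
proof -
  have [measurable]: "E \<in> sets borel" using pcD(1)[OF E] by (simp add: borel_closed)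
  show ?thesis unfolding G_eq[OF E] by measurable
qed

lemma Ms_borel: assumes E: "pseudo_cone C E" shows "Ms E \<in> sets borel"
proof -
  have "Ms E = UNIV - {x. T E x \<noteq> {}}" by (auto simp: Ms_def)
  then show ?thesis using G_borel[OF E] by auto
qed

lemma rho_meas: assumes E: "pseudo_cone C E" shows "rho E \<in> borel_measurable borel"
proof (rule borel_measurableI_le)
  fix y :: real
  have [measurable]: "E \<in> sets borel" using pcD(1)[OF E] by (simp add: borel_closed)
  have G: "{x. T E x \<noteq> {}} \<in> sets borel" by (rule G_borel[OF E])
  show "{x \<in> space borel. rho E x \<le> y} \<in> sets borel"
  proof (cases "y < 0")
    case True
    then have "\<And>x. \<not> rho E x \<le> y" using rho_ge0[OF E] by (meson less_le_trans not_le)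
    then have "{x \<in> space borel. rho E x \<le> y} = {}" by blast
    then show ?thesis by simp
  next
    case False
    have "{x \<in> space borel. rho E x \<le> y} = (UNIV - {x. T E x \<noteq> {}}) \<union> {x. 0 < y \<and> y *\<^sub>R x \<in> E}"
    proof (intro set_eqI iffI)
      fix x assume x: "x \<in> {x \<in> space borel. rho E x \<le> y}"
      show "x \<in> (UNIV - {x. T E x \<noteq> {}}) \<union> {x. 0 < y \<and> y *\<^sub>R x \<in> E}"
      proof (cases "T E x = {}")
        case False
        then have "y \<in> T E x" using T_iff[OF E False] x by auto
        then show ?thesis by (auto simp: T_def)
      qed simp
    next
      fix x assume x: "x \<in> (UNIV - {x. T E x \<noteq> {}}) \<union> {x. 0 < y \<and> y *\<^sub>R x \<in> E}"
      show "x \<in> {x \<in> space borel. rho E x \<le> y}"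
      proof (cases "T E x = {}")
        case True then show ?thesis using False by (simp add: rho_def)
      next
        case ne: False
        then have "y \<in> T E x" using x by (auto simp: T_def)
        then show ?thesis using T_iff(1)[OF E ne] by simp
      qed
    qed
    also have "\<dots> \<in> sets borel" using G by measurable
    finally show ?thesis .
  qed
qed

lemma Rr_meas: assumes E: "pseudo_cone C E" shows "Rr E \<in> borel_measurable borel"
  using rho_meas[OF E] unfolding Rr_def by measurable

lemma decomp: assumes E: "pseudo_cone C E"
  shows "W x * indicator (- E) x = W x * indicator {x. norm x < Rr E x} x + W x * indicator (Ms E) x"
proof (cases "x \<in> C - {0}")
  case False then show ?thesis by (simp add: W_zero)
next
  case True
  show ?thesis
  proof (cases "T E x = {}")
    case True
    then show ?thesis using T_empty_notin[OF True] by (simp add: Ms_def Rr_def rho_def)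
  next
    case ne: False
    have "x \<notin> E \<longleftrightarrow> norm x < Rr E x"
    proof -
      have "norm x > 0" using True by simp
      then have "norm x * 1 < norm x * rho E x \<longleftrightarrow> 1 < rho E x" by (rule mult_less_cancel_left_pos)
      then show ?thesis using mem_iff[OF E ne] by (simp add: Rr_def not_le)
    qed
    then show ?thesis using ne by (simp add: Ms_def indicator_def)
  qed
qed

lemma covol_eq: assumes "0 \<notin> E"
  shows "covol C Th E = (\<integral>\<^sup>+x. W x * indicator (- E) x \<partial>lborel)"
proof -
  have "covol C Th E = (\<integral>\<^sup>+x. ennreal (Th x) * indicator (C - E) x \<partial>lborel)"
    unfolding covol_def by (simp add: nn_integral_completion)
  also have "\<dots> = (\<integral>\<^sup>+x. W x * indicator (- E) x \<partial>lborel)"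
  proof (rule nn_integral_cong_AE)
    show "AE x in lborel. ennreal (Th x) * indicator (C - E) x = W x * indicator (- E) x"
      using AE_lborel_singleton[of 0] by eventually_elim (auto simp: W_def indicator_def)
  qed
  finally show ?thesis .
qed

end



lemma ae_set_eq:
  fixes A B :: "'a::euclidean_space set"
  assumes AB: "AE x in lborel. (x \<in> A) = (x \<in> B)"
    and A: "closed A" "convex A" "interior A \<noteq> {}" and B: "closed B" "convex B" "interior B \<noteq> {}"
  shows "A = B"
proof -
  have sub: "X \<subseteq> Y" if XY: "AE x in lborel. (x \<in> X) = (x \<in> Y)" and X: "convex X" "interior X \<noteq> {}"
    and Y: "closed Y" for X Y :: "'a set"
  proof -
    have "interior X \<subseteq> Y"
    proof
      fix x assume x: "x \<in> interior X"
      show "x \<in> Y"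
      proof (rule ccontr)
        assume nx: "x \<notin> Y"
        define U where "U = interior X \<inter> - Y"
        have oU: "open U" using Y by (auto simp: U_def)
        have neU: "U \<noteq> {}" using x nx by (auto simp: U_def)
        have "AE y in lborel. y \<notin> U"
          using XY by eventually_elim (use interior_subset in \<open>auto simp: U_def\<close>)
        then have "U \<in> null_sets lborel" using oU by (subst AE_iff_null_sets) auto
        then have "U \<in> null_sets lebesgue" by (rule null_sets_completionI)
        then have "negligible U" by (simp add: negligible_iff_null_sets)
        then show False using open_not_negligible[OF oU neU] by simp
      qed
    qed
    then have "closure (interior X) \<subseteq> Y" using Y by (simp add: closure_minimal)
    then show ?thesis using convex_closure_interior[OF X] closure_subset by blast
  qed
  show ?thesis
  proof
    show "A \<subseteq> B" using sub[OF AB A(2,3) B(1)] .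
    have "AE x in lborel. (x \<in> B) = (x \<in> A)" using AB by eventually_elim auto
    then show "B \<subseteq> A" using sub[OF _ B(2,3) A(1)] by blast
  qed
qed

context cs begin

lemma null_cone:
  fixes g :: "'a \<Rightarrow> ennreal"
  assumes [measurable]: "g \<in> borel_measurable borel" and d: "deg0 g"
    and z: "(\<integral>\<^sup>+x. W x * g x * indicator {x. norm x < 1} x \<partial>lborel) = 0"
  shows "(\<integral>\<^sup>+x. W x * g x \<partial>lborel) = 0"
proof -
  have "(\<integral>\<^sup>+x. W x * g x * indicator {x. norm x < real n} x \<partial>lborel) = 0" for n :: nat
    using lemA[OF _ d, of "real n"] z by simp
  then have "AE x in lborel. W x * g x * indicator {x. norm x < real n} x = 0" for n :: nat
    by (subst nn_integral_0_iff_AE[symmetric]) auto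
  then have "\<forall>n::nat. AE x in lborel. W x * g x * indicator {x. norm x < real n} x = 0" by blast
  then have "AE x in lborel. \<forall>n::nat. W x * g x * indicator {x. norm x < real n} x = 0"
    by (rule AE_all_countable[THEN iffD2])
  then have "AE x in lborel. W x * g x = 0"
  proof eventually_elim
    case (elim x)
    obtain n :: nat where "norm x < real n" using reals_Archimedean2 by blast
    then show ?case using elim[rule_format, of n] by (simp add: indicator_def)
  qed
  then show ?thesis by (subst nn_integral_0_iff_AE) auto
qed

lemma fin_cone:
  fixes g :: "'a \<Rightarrow> ennreal"
  assumes [measurable]: "g \<in> borel_measurable borel" and d: "deg0 g"
    and f: "(\<integral>\<^sup>+x. W x * g x \<partial>lborel) < \<infinity>"
  shows "(\<integral>\<^sup>+x. W x * g x * indicator {x. norm x < 1} x \<partial>lborel) = 0"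
proof (rule ccontr)
  define I where "I = (\<integral>\<^sup>+x. W x * g x * indicator {x. norm x < 1} x \<partial>lborel)"
  define B where "B = (\<integral>\<^sup>+x. W x * g x \<partial>lborel)"
  assume "I \<noteq> 0" then have I0: "I \<noteq> 0" by (simp add: I_def)
  have le: "ennreal (c powr p) * I \<le> B" if c: "c > 0" for c
  proof -
    have "ennreal (c powr p) * I = (\<integral>\<^sup>+x. W x * g x * indicator {x. norm x < c} x \<partial>lborel)"
      unfolding I_def using lemA[OF _ d, of c] c by simp
    also have "\<dots> \<le> B" unfolding B_def by (intro nn_integral_mono) (auto simp: indicator_def)
    finally show ?thesis .
  qed
  have Bf: "B < \<infinity>" using f by (simp add: B_def)
  have If: "I < \<infinity>" using le[of 1] Bf by simp
  obtain i where i: "I = ennreal i" "i \<ge> 0" using If by (cases I) auto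
  obtain b where b: "B = ennreal b" "b \<ge> 0" using Bf by (cases B) auto
  have ip: "i > 0" using i I0 by (cases "i = 0") auto
  define c where "c = ((b + 1) / i) powr (1 / p)"
  have cp: "c > 0" using ip b by (simp add: c_def)
  have "c powr p = (b + 1) / i" using ip b p0 by (simp add: c_def powr_powr)
  moreover have "ennreal ((b + 1) / i) * ennreal i = ennreal (b + 1)"
    using ip b by (simp add: ennreal_mult[symmetric])
  ultimately have "ennreal (c powr p) * I = ennreal (b + 1)" using i by simp
  then have "ennreal (b + 1) \<le> ennreal b" using le[OF cp] b by simp
  then show False using b by (simp add: ennreal_le_iff)
qed

definition Vv :: "'a set \<Rightarrow> ennreal" where "Vv E = (\<integral>\<^sup>+x. W x * indicator (- E) x \<partial>lborel)"
definition Ps :: "'a \<Rightarrow> ennreal" where "Ps x = W x * indicator {x. norm x < 1} x"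

lemma Ps_meas[measurable]: "Ps \<in> borel_measurable borel"
  unfolding Ps_def by measurable

lemma Ms_null: assumes E: "pseudo_cone C E" and f: "Vv E < \<infinity>"
  shows "(\<integral>\<^sup>+x. W x * indicator (Ms E) x \<partial>lborel) = 0"
proof -
  have [measurable]: "Ms E \<in> sets borel" by (rule Ms_borel[OF E])
  have "(\<integral>\<^sup>+x. W x * indicator (Ms E) x \<partial>lborel) \<le> Vv E"
    unfolding Vv_def by (intro nn_integral_mono) (auto simp: decomp[OF E])
  then have "(\<integral>\<^sup>+x. W x * indicator (Ms E) x \<partial>lborel) < \<infinity>" using f by simp
  then show ?thesis using fin_cone[OF _ Ms_deg0] null_cone[OF _ Ms_deg0] by simp
qed

lemma V_repr: assumes E: "pseudo_cone C E" and f: "Vv E < \<infinity>"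
  shows "Vv E = (\<integral>\<^sup>+x. Ps x * ennreal (Rr E x powr p) \<partial>lborel)"
proof -
  have [measurable]: "Ms E \<in> sets borel" by (rule Ms_borel[OF E])
  have [measurable]: "Rr E \<in> borel_measurable borel" by (rule Rr_meas[OF E])
  have "Vv E = (\<integral>\<^sup>+x. W x * indicator {x. norm x < Rr E x} x + W x * indicator (Ms E) x \<partial>lborel)"
    unfolding Vv_def by (simp add: decomp[OF E])
  also have "\<dots> = (\<integral>\<^sup>+x. W x * indicator {x. norm x < Rr E x} x \<partial>lborel) + (\<integral>\<^sup>+x. W x * indicator (Ms E) x \<partial>lborel)"
    by (intro nn_integral_add) auto
  also have "\<dots> = (\<integral>\<^sup>+x. W x * indicator {x. norm x < Rr E x} x \<partial>lborel)"
    using Ms_null[OF E f] by simp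
  also have "\<dots> = (\<integral>\<^sup>+x. Ps x * ennreal (Rr E x powr p) \<partial>lborel)"
    unfolding Ps_def by (rule disint[OF _ Rr_ge0[OF E] Rr_deg0[OF E]]) auto
  finally show ?thesis .
qed

lemma V_pos: assumes E: "pseudo_cone C E" shows "Vv E > 0"
proof (rule ccontr)
  assume "\<not> Vv E > 0"
  then have V0: "Vv E = 0" by simp
  have [measurable]: "E \<in> sets borel" using pcD(1)[OF E] by (simp add: borel_closed)
  obtain d where d: "d > 0" "\<forall>x\<in>E. d \<le> norm x" using pc_delta[OF E] by blast
  obtain z where z: "z \<in> interior C" using C_int by auto
  then obtain e where e: "e > 0" "ball z e \<subseteq> C" using mem_interior by blast
  define s where "s = d / (2 * (norm z + e))"
  have ze: "norm z + e > 0" using e by (simp add: add_nonneg_pos)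
  then have s: "s > 0" using d by (simp add: s_def)
  define U where "U = ball (s *\<^sub>R z) (s * e)"
  have UC: "U \<subseteq> C"
  proof
    fix w assume "w \<in> U"
    then have "dist (s *\<^sub>R z) w < s * e" by (simp add: U_def)
    have eq: "z - w /\<^sub>R s = (s *\<^sub>R z - w) /\<^sub>R s" using s by (simp add: algebra_simps)
    have "dist z (w /\<^sub>R s) = norm (s *\<^sub>R z - w) / s" unfolding dist_norm eq using s by (simp add: divide_inverse_commute)
    also have "\<dots> < e" using \<open>dist (s *\<^sub>R z) w < s * e\<close> s by (simp add: dist_norm pos_divide_less_eq mult.commute)
    finally have "dist z (w /\<^sub>R s) < e" .
    then have "w /\<^sub>R s \<in> C" using e by auto
    then have "s *\<^sub>R (w /\<^sub>R s) \<in> C" using C_cone s unfolding cone_def by (meson less_imp_le)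
    then show "w \<in> C" using s by simp
  qed
  have UE: "U \<inter> E = {}"
  proof -
    have "norm w < d" if "w \<in> U" for w
    proof -
      have "norm w \<le> norm (s *\<^sub>R z) + dist (s *\<^sub>R z) w" by (metis dist_norm norm_triangle_sub norm_minus_commute)
      also have "\<dots> < s * norm z + s * e" using that s by (simp add: U_def)
      also have "\<dots> = s * (norm z + e)" by (simp add: algebra_simps)
      also have "\<dots> = d / 2" using ze unfolding s_def by (simp add: field_simps)
      finally show ?thesis using d by simp
    qed
    then show ?thesis using d by force
  qed
  have "AE x in lborel. W x * indicator (- E) x = 0"
    using V0 unfolding Vv_def by (subst nn_integral_0_iff_AE[symmetric]) auto
  then have "AE x in lborel. x \<notin> U"
    using AE_lborel_singleton[of 0]
  proof eventually_elim
    case (elim x)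
    show ?case
    proof
      assume xU: "x \<in> U"
      then have "x \<in> C - {0}" "x \<notin> E" using UC UE elim(2) by auto
      then show False using elim(1) W_pos[of x] by simp
    qed
  qed
  then have "U \<in> null_sets lborel" by (subst AE_iff_null_sets) (auto simp: U_def)
  then have "U \<in> null_sets lebesgue" by (rule null_sets_completionI)
  then have "negligible U" by (simp add: negligible_iff_null_sets)
  moreover have "U \<noteq> {}" using s e by (simp add: U_def not_le)
  ultimately show False using open_not_negligible[of U] by (simp add: U_def)
qed

lemma V_scale: assumes E: "closed E" and c: "c > 0"
  shows "Vv ((\<lambda>x. c *\<^sub>R x) ` E) = ennreal (c powr p) * Vv E"
proof -
  have [measurable]: "(\<lambda>x. c *\<^sub>R x) ` E \<in> sets borel" using closed_scaling[OF E] by (simp add: borel_closed)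
  have "Vv ((\<lambda>x. c *\<^sub>R x) ` E) = ennreal (c powr p) * (\<integral>\<^sup>+x. W x * indicator (- ((\<lambda>x. c *\<^sub>R x) ` E)) (c *\<^sub>R x) \<partial>lborel)"
    unfolding Vv_def using c by (intro scale) auto
  also have "(\<integral>\<^sup>+x. W x * indicator (- ((\<lambda>x. c *\<^sub>R x) ` E)) (c *\<^sub>R x) \<partial>lborel) = Vv E"
    unfolding Vv_def
  proof (intro nn_integral_cong)
    fix x
    have "c *\<^sub>R x \<in> (\<lambda>x. c *\<^sub>R x) ` E \<longleftrightarrow> x \<in> E" using c by auto
    then show "W x * indicator (- ((\<lambda>x. c *\<^sub>R x) ` E)) (c *\<^sub>R x) = W x * indicator (- E) x"
      by (simp add: indicator_def)
  qed
  finally show ?thesis .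
qed

end



context cs begin

lemma msum_0: assumes E1: "pseudo_cone C E1" and E2: "pseudo_cone C E2"
  shows "0 \<notin> msum E1 E2"
proof
  assume "0 \<in> msum E1 E2"
  then obtain x y where xy: "x \<in> E1" "y \<in> E2" "x + y = 0" by (auto simp: msum_def)
  then have "y = - x" by (metis add.commute add_eq_0_iff)
  then have "x \<in> C" "- x \<in> C" using xy pc_sub[OF E1] pc_sub[OF E2] by auto
  then have "x \<in> C \<inter> uminus ` C" by (metis IntI image_eqI minus_minus)
  then have "x = 0" using pc by (auto simp: pointed_cone_def)
  then show False using xy pcD(3)[OF E1] by simp
qed

lemma msum_up: assumes E1: "pseudo_cone C E1" and E2: "pseudo_cone C E2"
  and x: "x \<in> msum E1 E2" and l: "l \<ge> 1" shows "l *\<^sub>R x \<in> msum E1 E2"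
proof -
  obtain u v where uv: "u \<in> E1" "v \<in> E2" "x = u + v" using x by (auto simp: msum_def)
  have "l *\<^sub>R u \<in> E1" "l *\<^sub>R v \<in> E2" using uv l pcD(5)[OF E1] pcD(5)[OF E2] by auto
  then show ?thesis using uv by (auto simp: msum_def scaleR_add_right)
qed

lemma msum_point:
  assumes E1: "pseudo_cone C E1" and E2: "pseudo_cone C E2"
  shows "W x * indicator (- msum E1 E2) x \<le> W x * indicator {x. norm x < Rr E1 x + Rr E2 x} x
     + W x * indicator (Ms E1) x + W x * indicator (Ms E2) x"
proof (cases "x \<in> C - {0} \<and> x \<notin> msum E1 E2 \<and> x \<notin> Ms E1 \<and> x \<notin> Ms E2")
  case False
  then show ?thesis by (auto simp: W_zero indicator_def)
next
  case True
  then have ne1: "T E1 x \<noteq> {}" and ne2: "T E2 x \<noteq> {}" by (auto simp: Ms_def)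
  have "rho E1 x *\<^sub>R x \<in> E1" using T_inf(1)[OF E1 ne1] by (simp add: T_def)
  moreover have "rho E2 x *\<^sub>R x \<in> E2" using T_inf(1)[OF E2 ne2] by (simp add: T_def)
  ultimately have s: "(rho E1 x + rho E2 x) *\<^sub>R x \<in> msum E1 E2"
    by (auto simp: msum_def scaleR_add_left)
  have r0: "rho E1 x + rho E2 x > 0" using T_iff(2)[OF E1 ne1] T_iff(2)[OF E2 ne2] by simp
  have "norm x < Rr E1 x + Rr E2 x"
  proof (rule ccontr)
    assume "\<not> norm x < Rr E1 x + Rr E2 x"
    then have "norm x * (rho E1 x + rho E2 x) \<le> norm x * 1" by (simp add: Rr_def algebra_simps)
    then have le: "rho E1 x + rho E2 x \<le> 1" using True by simp
    have "inverse (rho E1 x + rho E2 x) *\<^sub>R ((rho E1 x + rho E2 x) *\<^sub>R x) \<in> msum E1 E2"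
    proof (rule msum_up[OF E1 E2 s])
      show "1 \<le> inverse (rho E1 x + rho E2 x)" using le r0 by (simp add: one_le_inverse_iff)
    qed
    then have "x \<in> msum E1 E2" using r0 by simp
    then show False using True by simp
  qed
  then show ?thesis using True by (simp add: indicator_def)
qed

lemma Ps_pos: "Ps x \<noteq> 0 \<Longrightarrow> Ps x = ennreal (Th x) \<and> Th x > 0"
  using pos by (auto simp: Ps_def W_def indicator_def split: if_splits)

lemma main:
  assumes E1: "pseudo_cone C E1" and E2: "pseudo_cone C E2"
    and f1: "Vv E1 < \<infinity>" and f2: "Vv E2 < \<infinity>"
  defines "a \<equiv> enn2real (Vv E1) powr (1 / p)" and "b \<equiv> enn2real (Vv E2) powr (1 / p)"
  shows "Vv (msum E1 E2) \<le> ennreal ((a + b) powr p)"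
    and "p > 1 \<Longrightarrow> Vv (msum E1 E2) = ennreal ((a + b) powr p) \<Longrightarrow> dilates E1 E2"
proof -
  define r1 where "r1 = Rr E1"
  define r2 where "r2 = Rr E2"
  have [measurable]: "r1 \<in> borel_measurable borel" "r2 \<in> borel_measurable borel"
    unfolding r1_def r2_def by (intro Rr_meas E1 E2)+
  have [measurable]: "Ms E1 \<in> sets borel" "Ms E2 \<in> sets borel" by (intro Ms_borel E1 E2)+
  have r0: "r1 x \<ge> 0" "r2 x \<ge> 0" for x unfolding r1_def r2_def by (intro Rr_ge0 E1 E2)+
  define A1 where "A1 = enn2real (Vv E1)"
  define A2 where "A2 = enn2real (Vv E2)"
  have V1: "Vv E1 = ennreal A1" using f1 by (simp add: A1_def)
  have V2: "Vv E2 = ennreal A2" using f2 by (simp add: A2_def)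
  have A1p: "A1 > 0" using V_pos[OF E1] unfolding V1 by simp
  have A2p: "A2 > 0" using V_pos[OF E2] unfolding V2 by simp
  have ap: "a > 0" "b > 0" using A1p A2p by (simp_all add: a_def b_def A1_def[symmetric] A2_def[symmetric])
  have aA: "a powr p = A1" "b powr p = A2"
    using A1p A2p p0 by (simp_all add: a_def b_def A1_def[symmetric] A2_def[symmetric] powr_powr)
  define K1 where "K1 = (a + b) powr (p - 1) / a powr (p - 1)"
  define K2 where "K2 = (a + b) powr (p - 1) / b powr (p - 1)"
  have K0: "K1 \<ge> 0" "K2 \<ge> 0" by (simp_all add: K1_def K2_def)
  have I1: "(\<integral>\<^sup>+x. Ps x * ennreal (r1 x powr p) \<partial>lborel) = ennreal A1"
    using V_repr[OF E1 f1] V1 by (simp add: r1_def)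
  have I2: "(\<integral>\<^sup>+x. Ps x * ennreal (r2 x powr p) \<partial>lborel) = ennreal A2"
    using V_repr[OF E2 f2] V2 by (simp add: r2_def)
  define F where "F x = Ps x * (ennreal K1 * ennreal (r1 x powr p) + ennreal K2 * ennreal (r2 x powr p))" for x
  define G where "G x = Ps x * ennreal ((r1 x + r2 x) powr p)" for x
  have [measurable]: "F \<in> borel_measurable borel" "G \<in> borel_measurable borel"
    unfolding F_def G_def by measurable
  have KA: "K1 * A1 + K2 * A2 = (a + b) powr p"
  proof -
    have "K1 * A1 = (a + b) powr (p - 1) * a" using ap
      by (simp add: K1_def aA(1)[symmetric] powr_diff)
    moreover have "K2 * A2 = (a + b) powr (p - 1) * b" using ap
      by (simp add: K2_def aA(2)[symmetric] powr_diff)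
    ultimately have "K1 * A1 + K2 * A2 = (a + b) powr (p - 1) * (a + b)" by (simp add: algebra_simps)
    also have "\<dots> = (a + b) powr p" using ap powr_add[of "a + b" "p - 1" 1] by simp
    finally show ?thesis .
  qed
  have intF: "integral\<^sup>N lborel F = ennreal ((a + b) powr p)"
  proof -
    have "integral\<^sup>N lborel F = (\<integral>\<^sup>+x. ennreal K1 * (Ps x * ennreal (r1 x powr p)) + ennreal K2 * (Ps x * ennreal (r2 x powr p)) \<partial>lborel)"
      unfolding F_def by (intro nn_integral_cong) (simp add: algebra_simps)
    also have "\<dots> = ennreal K1 * ennreal A1 + ennreal K2 * ennreal A2"
      by (subst nn_integral_add) (auto simp: nn_integral_cmult I1 I2)
    also have "\<dots> = ennreal ((a + b) powr p)"
      using K0 A1p A2p KA by (simp add: ennreal_mult[symmetric] ennreal_plus[symmetric] del: ennreal_plus)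
    finally show ?thesis .
  qed
  have GF: "G x \<le> F x" for x
  proof -
    have "(r1 x + r2 x) powr p \<le> K1 * r1 x powr p + K2 * r2 x powr p"
      using pw(1)[OF p1 ap r0(1)[of x] r0(2)[of x]] by (simp add: K1_def K2_def algebra_simps)
    then have "ennreal ((r1 x + r2 x) powr p) \<le> ennreal K1 * ennreal (r1 x powr p) + ennreal K2 * ennreal (r2 x powr p)"
      using K0 by (simp add: ennreal_mult[symmetric] ennreal_plus[symmetric] del: ennreal_plus)
    then show ?thesis unfolding F_def G_def by (intro mult_left_mono) auto
  qed
  have VG: "Vv (msum E1 E2) \<le> integral\<^sup>N lborel G"
  proof -
    have "Vv (msum E1 E2) \<le> (\<integral>\<^sup>+x. W x * indicator {x. norm x < r1 x + r2 x} x
        + W x * indicator (Ms E1) x + W x * indicator (Ms E2) x \<partial>lborel)"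
      unfolding Vv_def r1_def r2_def by (intro nn_integral_mono msum_point E1 E2)
    also have "\<dots> = (\<integral>\<^sup>+x. W x * indicator {x. norm x < r1 x + r2 x} x \<partial>lborel)
        + (\<integral>\<^sup>+x. W x * indicator (Ms E1) x \<partial>lborel) + (\<integral>\<^sup>+x. W x * indicator (Ms E2) x \<partial>lborel)"
    proof -
      define g1 where "g1 x = W x * indicator {x. norm x < r1 x + r2 x} x" for x
      define g2 where "g2 x = W x * indicator (Ms E1) x" for x
      define g3 where "g3 x = W x * indicator (Ms E2) x" for x
      have [measurable]: "g1 \<in> borel_measurable borel" "g2 \<in> borel_measurable borel" "g3 \<in> borel_measurable borel"
        unfolding g1_def g2_def g3_def by measurable
      have "(\<integral>\<^sup>+x. g1 x + g2 x + g3 x \<partial>lborel) = (\<integral>\<^sup>+x. g1 x + g2 x \<partial>lborel) + integral\<^sup>N lborel g3"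
        by (rule nn_integral_add) auto
      also have "(\<integral>\<^sup>+x. g1 x + g2 x \<partial>lborel) = integral\<^sup>N lborel g1 + integral\<^sup>N lborel g2"
        by (rule nn_integral_add) auto
      finally show ?thesis unfolding g1_def g2_def g3_def .
    qed
    also have "\<dots> = (\<integral>\<^sup>+x. W x * indicator {x. norm x < r1 x + r2 x} x \<partial>lborel)"
      using Ms_null[OF E1 f1] Ms_null[OF E2 f2] by simp
    also have "\<dots> = integral\<^sup>N lborel G"
    proof -
      have "deg0 (\<lambda>x. r1 x + r2 x)" using Rr_deg0[OF E1] Rr_deg0[OF E2]
        by (simp add: deg0_def r1_def r2_def)
      then show ?thesis unfolding G_def Ps_def
        by (intro disint) (auto intro: add_nonneg_nonneg r0)
    qed
    finally show ?thesis .
  qed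
  have GleF: "integral\<^sup>N lborel G \<le> integral\<^sup>N lborel F" by (intro nn_integral_mono GF)
  show "Vv (msum E1 E2) \<le> ennreal ((a + b) powr p)" using VG GleF intF by simp
  assume p1': "p > 1" and eq: "Vv (msum E1 E2) = ennreal ((a + b) powr p)"
  have GeqF: "integral\<^sup>N lborel G = integral\<^sup>N lborel F" using VG GleF intF eq by simp
  have "(\<integral>\<^sup>+x. F x - G x \<partial>lborel) = integral\<^sup>N lborel F - integral\<^sup>N lborel G"
    using GeqF intF GF by (intro nn_integral_diff) auto
  then have "(\<integral>\<^sup>+x. F x - G x \<partial>lborel) = 0" using GeqF intF by simp
  then have "AE x in lborel. F x - G x = 0" by (subst nn_integral_0_iff_AE[symmetric]) auto
  then have AEeq: "AE x in lborel. Ps x \<noteq> 0 \<longrightarrow> r1 x * b = r2 x * a"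
  proof eventually_elim
    case (elim x)
    show ?case
    proof
      assume P: "Ps x \<noteq> 0"
      then have Pt: "Ps x = ennreal (Th x)" "Th x > 0" using Ps_pos by auto
      have "F x \<le> G x" using elim by (rule ennreal_minus_eq_0)
      then have "ennreal (Th x * (K1 * r1 x powr p + K2 * r2 x powr p)) \<le> ennreal (Th x * (r1 x + r2 x) powr p)"
        unfolding F_def G_def Pt using K0 Pt
        by (simp add: ennreal_mult[symmetric] ennreal_plus[symmetric] del: ennreal_plus)
      then have "Th x * (K1 * r1 x powr p + K2 * r2 x powr p) \<le> Th x * (r1 x + r2 x) powr p"
        using Pt by (simp add: ennreal_le_iff)
      then have "K1 * r1 x powr p + K2 * r2 x powr p \<le> (r1 x + r2 x) powr p"
        using Pt by simp
      moreover have "(r1 x + r2 x) powr p \<le> K1 * r1 x powr p + K2 * r2 x powr p"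
        using pw(1)[OF p1 ap r0(1)[of x] r0(2)[of x]] by (simp add: K1_def K2_def algebra_simps)
      ultimately have "(r1 x + r2 x) powr p = (a + b) powr (p - 1) * (r1 x powr p / a powr (p - 1) + r2 x powr p / b powr (p - 1))"
        by (simp add: K1_def K2_def algebra_simps)
      then show "r1 x * b = r2 x * a" using pw(2)[OF p1 ap r0(1)[of x] r0(2)[of x] p1'] by simp
    qed
  qed
  define D where "D = {x. r1 x * b \<noteq> r2 x * a}"
  have [measurable]: "D \<in> sets borel" unfolding D_def by measurable
  have dD: "deg0 (indicator D :: 'a \<Rightarrow> ennreal)"
    using Rr_deg0[OF E1] Rr_deg0[OF E2] by (simp add: deg0_def D_def r1_def r2_def indicator_def)
  have "(\<integral>\<^sup>+x. W x * indicator D x * indicator {x. norm x < 1} x \<partial>lborel) = 0"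
  proof (subst nn_integral_0_iff_AE)
    show "AE x in lborel. W x * indicator D x * indicator {x. norm x < 1} x = 0"
      using AEeq by eventually_elim (auto simp: D_def Ps_def indicator_def)
  qed auto
  then have "(\<integral>\<^sup>+x. W x * indicator D x \<partial>lborel) = 0" by (intro null_cone[OF _ dD]) auto
  then have AD: "AE x in lborel. W x * indicator D x = 0" by (subst nn_integral_0_iff_AE[symmetric]) auto
  have AM1: "AE x in lborel. W x * indicator (Ms E1) x = 0"
    using Ms_null[OF E1 f1] by (subst nn_integral_0_iff_AE[symmetric]) auto
  have AM2: "AE x in lborel. W x * indicator (Ms E2) x = 0"
    using Ms_null[OF E2 f2] by (subst nn_integral_0_iff_AE[symmetric]) auto
  define c where "c = b / a"
  have cp: "c > 0" using ap by (simp add: c_def)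
  have img: "x \<in> (\<lambda>x. c *\<^sub>R x) ` E1 \<longleftrightarrow> inverse c *\<^sub>R x \<in> E1" for x
  proof
    assume "x \<in> (\<lambda>x. c *\<^sub>R x) ` E1" then show "inverse c *\<^sub>R x \<in> E1" using cp by auto
  next
    assume "inverse c *\<^sub>R x \<in> E1"
    moreover have "x = c *\<^sub>R (inverse c *\<^sub>R x)" using cp by simp
    ultimately show "x \<in> (\<lambda>x. c *\<^sub>R x) ` E1" by blast
  qed
  have "AE x in lborel. (x \<in> E2) = (x \<in> (\<lambda>x. c *\<^sub>R x) ` E1)"
    using AD AM1 AM2
  proof eventually_elim
    case (elim x)
    show ?case
    proof (cases "x \<in> C - {0}")
      case False
      have "x \<notin> E2" using False pc_sub[OF E2] pcD(3)[OF E2] by auto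
      moreover have "x \<notin> (\<lambda>x. c *\<^sub>R x) ` E1"
      proof
        assume "x \<in> (\<lambda>x. c *\<^sub>R x) ` E1"
        then have "inverse c *\<^sub>R x \<in> E1" using img by blast
        then have "inverse c *\<^sub>R x \<in> C - {0}" using pc_sub[OF E1] pcD(3)[OF E1] by auto
        then have "x \<in> C - {0}" using C_scale_iff[of "inverse c" x] cp by simp
        then show False using False by simp
      qed
      ultimately show ?thesis by simp
    next
      case True
      then have Wp: "W x \<noteq> 0" using W_pos[OF True] by simp
      then have nD: "x \<notin> D" and n1: "T E1 x \<noteq> {}" and n2: "T E2 x \<noteq> {}"
        using elim by (auto simp: indicator_def Ms_def split: if_splits)
      have nx: "norm x > 0" using True by simp
      have "norm x * rho E1 x * b = norm x * rho E2 x * a" using nD by (simp add: D_def r1_def r2_def Rr_def)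
      then have rr: "rho E2 x = c * rho E1 x" using nx ap by (simp add: c_def field_simps)
      have "x \<in> E2 \<longleftrightarrow> rho E2 x \<le> 1" by (rule mem_iff[OF E2 n2])
      also have "\<dots> \<longleftrightarrow> rho E1 x \<le> inverse c" using cp rr by (simp add: field_simps)
      also have "\<dots> \<longleftrightarrow> inverse c \<in> T E1 x" using T_iff(1)[OF E1 n1] by simp
      also have "\<dots> \<longleftrightarrow> inverse c *\<^sub>R x \<in> E1" using cp by (simp add: T_def)
      also have "\<dots> \<longleftrightarrow> x \<in> (\<lambda>x. c *\<^sub>R x) ` E1" using img by simp
      finally show ?thesis .
    qed
  qed
  moreover have "interior ((\<lambda>x. c *\<^sub>R x) ` E1) \<noteq> {}"
  proof -
    have "linear (\<lambda>x::'a. c *\<^sub>R x)" by (simp add: bounded_linear.linear bounded_linear_scaleR_right)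
    moreover have "inj (\<lambda>x::'a. c *\<^sub>R x)" using cp by (auto intro: injI)
    ultimately have "interior ((\<lambda>x. c *\<^sub>R x) ` E1) = (\<lambda>x. c *\<^sub>R x) ` interior E1"
      by (rule interior_injective_linear_image)
    then show ?thesis using pc_int[OF E1] by simp
  qed
  ultimately have "E2 = (\<lambda>x. c *\<^sub>R x) ` E1"
    using pcD(1,2)[OF E2] pc_int[OF E2] closed_scaling[OF pcD(1)[OF E1]] convex_scaling[OF pcD(2)[OF E1]]
    by (intro ae_set_eq) auto
  then show "dilates E1 E2" using cp by (auto simp: dilates_def)
qed

end



context cs begin

lemma msum_dil: assumes E: "pseudo_cone C E" and l: "l > 0"
  shows "msum E ((\<lambda>x. l *\<^sub>R x) ` E) = (\<lambda>x. (1 + l) *\<^sub>R x) ` E"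
proof (intro set_eqI iffI)
  fix x assume "x \<in> msum E ((\<lambda>x. l *\<^sub>R x) ` E)"
  then obtain y z where yz: "y \<in> E" "z \<in> E" "x = y + l *\<^sub>R z" by (auto simp: msum_def)
  have "(1 / (1 + l)) *\<^sub>R y + (l / (1 + l)) *\<^sub>R z \<in> E"
    using l yz by (intro convexD[OF pcD(2)[OF E]]) (auto simp: field_simps)
  moreover have "x = (1 + l) *\<^sub>R ((1 / (1 + l)) *\<^sub>R y + (l / (1 + l)) *\<^sub>R z)"
    using l yz by (simp add: scaleR_add_right)
  ultimately show "x \<in> (\<lambda>x. (1 + l) *\<^sub>R x) ` E" by blast
next
  fix x assume "x \<in> (\<lambda>x. (1 + l) *\<^sub>R x) ` E"
  then obtain y where y: "y \<in> E" "x = (1 + l) *\<^sub>R y" by auto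
  then have "x = y + l *\<^sub>R y" by (simp add: scaleR_add_left)
  then show "x \<in> msum E ((\<lambda>x. l *\<^sub>R x) ` E)" using y by (auto simp: msum_def)
qed

lemma final:
  assumes c1: "close_set C Th E1" and c2: "close_set C Th E2"
  shows "covol C Th (msum E1 E2) < \<infinity> \<and>
         enn2real (covol C Th (msum E1 E2)) powr (1 / (real DIM('a) - q))
           \<le> enn2real (covol C Th E1) powr (1 / (real DIM('a) - q))
            + enn2real (covol C Th E2) powr (1 / (real DIM('a) - q))
         \<and> (q < real DIM('a) - 1 \<longrightarrow>
             (enn2real (covol C Th (msum E1 E2)) powr (1 / (real DIM('a) - q))
               = enn2real (covol C Th E1) powr (1 / (real DIM('a) - q))
                + enn2real (covol C Th E2) powr (1 / (real DIM('a) - q)))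
             \<longleftrightarrow> dilates E1 E2)"
proof -
  have E1: "pseudo_cone C E1" and E2: "pseudo_cone C E2" using c1 c2 by (auto simp: close_set_def)
  have cv1: "covol C Th E1 = Vv E1" using covol_eq[OF pcD(3)[OF E1]] by (simp add: Vv_def)
  have cv2: "covol C Th E2 = Vv E2" using covol_eq[OF pcD(3)[OF E2]] by (simp add: Vv_def)
  have cvs: "covol C Th (msum E1 E2) = Vv (msum E1 E2)" using covol_eq[OF msum_0[OF E1 E2]] by (simp add: Vv_def)
  have f1: "Vv E1 < \<infinity>" and f2: "Vv E2 < \<infinity>" using c1 c2 cv1 cv2 by (auto simp: close_set_def)
  have pe: "real DIM('a) - q = p" by (simp add: p_def)
  define a where "a = enn2real (Vv E1) powr (1 / p)"
  define b where "b = enn2real (Vv E2) powr (1 / p)"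
  have ab0: "a \<ge> 0" "b \<ge> 0" by (simp_all add: a_def b_def)
  have bound: "Vv (msum E1 E2) \<le> ennreal ((a + b) powr p)"
    using main(1)[OF E1 E2 f1 f2] by (simp add: a_def b_def)
  have fs: "Vv (msum E1 E2) < \<infinity>" using bound by (simp add: le_less_trans)
  have es: "enn2real (Vv (msum E1 E2)) \<le> (a + b) powr p"
    using enn2real_mono[OF bound] by simp
  have ineq: "enn2real (Vv (msum E1 E2)) powr (1 / p) \<le> a + b"
  proof -
    have "enn2real (Vv (msum E1 E2)) powr (1 / p) \<le> ((a + b) powr p) powr (1 / p)"
      using es p0 by (intro powr_mono2) auto
    also have "\<dots> = a + b" using p0 ab0 by (simp add: powr_powr)
    finally show ?thesis .
  qed
  have eqv: "enn2real (Vv (msum E1 E2)) powr (1 / p) = a + b \<longleftrightarrow> dilates E1 E2" if q: "q < real DIM('a) - 1"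
  proof
    have p1': "p > 1" using q by (simp add: p_def)
    assume eq: "enn2real (Vv (msum E1 E2)) powr (1 / p) = a + b"
    have "enn2real (Vv (msum E1 E2)) = (enn2real (Vv (msum E1 E2)) powr (1 / p)) powr p"
      using p0 by (simp add: powr_powr)
    also have "\<dots> = (a + b) powr p" using eq by simp
    finally have e2: "enn2real (Vv (msum E1 E2)) = (a + b) powr p" .
    have "Vv (msum E1 E2) = ennreal (enn2real (Vv (msum E1 E2)))" using fs by simp
    then have "Vv (msum E1 E2) = ennreal ((a + b) powr p)" using e2 by simp
    then show "dilates E1 E2" using main(2)[OF E1 E2 f1 f2] p1' by (simp add: a_def b_def)
  next
    assume "dilates E1 E2"
    then obtain l where l: "l > 0" "E2 = (\<lambda>x. l *\<^sub>R x) ` E1" by (auto simp: dilates_def)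
    define A where "A = enn2real (Vv E1)"
    have A0: "A \<ge> 0" by (simp add: A_def)
    have VA: "Vv E1 = ennreal A" using f1 by (simp add: A_def)
    have "Vv (msum E1 E2) = ennreal ((1 + l) powr p) * ennreal A"
      using l msum_dil[OF E1 l(1)] V_scale[OF pcD(1)[OF E1], of "1 + l"] VA by simp
    then have "enn2real (Vv (msum E1 E2)) = (1 + l) powr p * A"
      using A0 l by (simp add: ennreal_mult[symmetric])
    then have s: "enn2real (Vv (msum E1 E2)) powr (1 / p) = (1 + l) * a"
      using A0 l p0 by (simp add: powr_mult powr_powr a_def A_def[symmetric])
    have "Vv E2 = ennreal (l powr p) * ennreal A"
      using l V_scale[OF pcD(1)[OF E1], of l] VA by simp
    then have "enn2real (Vv E2) = l powr p * A"
      using A0 l by (simp add: ennreal_mult[symmetric])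
    then have "b = l * a"
      using A0 l p0 by (simp add: powr_mult powr_powr a_def b_def A_def[symmetric])
    then show "enn2real (Vv (msum E1 E2)) powr (1 / p) = a + b" using s by (simp add: algebra_simps)
  qed
  show ?thesis unfolding cv1 cv2 cvs pe using fs ineq eqv by (simp add: a_def b_def)
qed

end


theorem theorem1p3:
  fixes C :: "'a::euclidean_space set" and \<Theta> :: "'a \<Rightarrow> real" and q :: real
    and E1 E2 :: "'a set"
  assumes "DIM('a) \<ge> 2"
    and "pointed_cone C"
    and "0 \<le> q" and "q \<le> real DIM('a) - 1"
    and "continuous_on (C - {0}) \<Theta>"
    and "\<forall>x\<in>C - {0}. \<Theta> x > 0"
    and "\<forall>x\<in>C - {0}. \<forall>t::real. t > 0 \<longrightarrow> \<Theta> (t *\<^sub>R x) = t powr (- q) * \<Theta> x"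
    and "close_set C \<Theta> E1" and "close_set C \<Theta> E2"
  shows "covol C \<Theta> (msum E1 E2) < \<infinity> \<and>
         enn2real (covol C \<Theta> (msum E1 E2)) powr (1 / (real DIM('a) - q))
           \<le> enn2real (covol C \<Theta> E1) powr (1 / (real DIM('a) - q))
            + enn2real (covol C \<Theta> E2) powr (1 / (real DIM('a) - q))
         \<and> (q < real DIM('a) - 1 \<longrightarrow>
             (enn2real (covol C \<Theta> (msum E1 E2)) powr (1 / (real DIM('a) - q))
               = enn2real (covol C \<Theta> E1) powr (1 / (real DIM('a) - q))
                + enn2real (covol C \<Theta> E2) powr (1 / (real DIM('a) - q)))
             \<longleftrightarrow> dilates E1 E2)"
proof -
  interpret cs C \<Theta> q
    using assms(2-7) by unfold_locales auto
  show ?thesis using final[OF assms(8,9)] .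
qed

end
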